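(* For every graph $G$ and every integer $\ell\ge 0$, a set $B\subseteq V(G)$ is an $\ell$-leaky forcing set of $G$ if and only if it is a mixed $\ell$-leaky forcing set of $G$. In particular $\operatorname{Z}_{(\ell)}(G)=\operatorname{Z}^m_{(\ell)}(G)$.
   Context: All graphs are finite, simple and undirected. Zero forcing: a blue vertex $u$ with exactly one white neighbor $w$ may force $w$ (color it blue), written $u\to w$. A vertex leak is a vertex not allowed to perform any force; an edge leak is an edge $xy$ across which no force may be performed (neither $x\to y$ nor $y\to x$); a specified leak is an ordered pair $x\to y$ meaning $x$ may not force $y$. $B$ is an $\ell$-leaky forcing set if for every set of at most $\ell$ vertex leaks, exhaustively applying the forcing rule from initial blue set $B$ colors all of $V(G)$ blue; $B$ is a mixed $\ell$-leaky forcing set if the same holds for every set of at most $\ell$ leaks of any mix of the three kinds. $\operatorname{Z}_{(\ell)}(G)$ and $\operatorname{Z}^m_{(\ell)}(G)$ are the minimum sizes of an $\ell$-leaky forcing set and a mixed $\ell$-leaky forcing set, respectively. *)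

theory Defs
  imports Main
begin

definition simple_graph :: "'a set \<Rightarrow> ('a \<Rightarrow> 'a \<Rightarrow> bool) \<Rightarrow> bool" where
  "simple_graph V E \<longleftrightarrow> finite V \<and> (\<forall>x y. E x y \<longrightarrow> E y x) \<and> (\<forall>x. \<not> E x x)
     \<and> (\<forall>x y. E x y \<longrightarrow> x \<in> V \<and> y \<in> V)"

text \<open>Final blue set obtained by exhaustively applying the zero forcing rule
from the initial blue set B, where the forces u \<rightarrow> w with (u,w) in F are
forbidden.\<close>
inductive_set fclosure :: "'a set \<Rightarrow> ('a \<Rightarrow> 'a \<Rightarrow> bool) \<Rightarrow> ('a \<times> 'a) set \<Rightarrow> 'a set \<Rightarrow> 'a set"
  for V E F B where
  init: "b \<in> B \<Longrightarrow> b \<in> fclosure V E F B"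
| force: "\<lbrakk> u \<in> fclosure V E F B; E u w; (u, w) \<notin> F;
            \<And>x. E u x \<Longrightarrow> x \<noteq> w \<Longrightarrow> x \<in> fclosure V E F B \<rbrakk>
          \<Longrightarrow> w \<in> fclosure V E F B"

datatype 'a leak = VLeak 'a | ELeak 'a 'a | SLeak 'a 'a

definition valid_leak :: "'a set \<Rightarrow> ('a \<Rightarrow> 'a \<Rightarrow> bool) \<Rightarrow> 'a leak \<Rightarrow> bool" where
  "valid_leak V E l = (case l of
      VLeak v \<Rightarrow> v \<in> V
    | ELeak x y \<Rightarrow> E x y
    | SLeak x y \<Rightarrow> E x y)"

fun forbidden :: "'a leak \<Rightarrow> ('a \<times> 'a) set" where
  "forbidden (VLeak v) = {(u, w). u = v}"
| "forbidden (ELeak x y) = {(x, y), (y, x)}"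
| "forbidden (SLeak x y) = {(x, y)}"

definition leaky_forcing_set :: "'a set \<Rightarrow> ('a \<Rightarrow> 'a \<Rightarrow> bool) \<Rightarrow> nat \<Rightarrow> 'a set \<Rightarrow> bool" where
  "leaky_forcing_set V E k B \<longleftrightarrow> B \<subseteq> V \<and>
     (\<forall>L. L \<subseteq> V \<and> card L \<le> k \<longrightarrow> fclosure V E {(u, w). u \<in> L} B = V)"

definition mixed_leaky_forcing_set :: "'a set \<Rightarrow> ('a \<Rightarrow> 'a \<Rightarrow> bool) \<Rightarrow> nat \<Rightarrow> 'a set \<Rightarrow> bool" where
  "mixed_leaky_forcing_set V E k B \<longleftrightarrow> B \<subseteq> V \<and>
     (\<forall>L. finite L \<and> card L \<le> k \<and> (\<forall>l\<in>L. valid_leak V E l)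
        \<longrightarrow> fclosure V E (\<Union>l\<in>L. forbidden l) B = V)"

definition leaky_Z :: "'a set \<Rightarrow> ('a \<Rightarrow> 'a \<Rightarrow> bool) \<Rightarrow> nat \<Rightarrow> nat" where
  "leaky_Z V E k = (LEAST n. \<exists>B. leaky_forcing_set V E k B \<and> card B = n)"

definition mixed_leaky_Z :: "'a set \<Rightarrow> ('a \<Rightarrow> 'a \<Rightarrow> bool) \<Rightarrow> nat \<Rightarrow> nat" where
  "mixed_leaky_Z V E k = (LEAST n. \<exists>B. mixed_leaky_forcing_set V E k B \<and> card B = n)"

end

theory Submission
  imports Defs
begin

lemma fclosure_sub_V:
  assumes "B \<subseteq> V" "simple_graph V E"
  shows "fclosure V E F B \<subseteq> V"
proof
  fix x assume "x \<in> fclosure V E F B"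
  then show "x \<in> V"
  proof induction
    case (init b) then show ?case using assms(1) by blast
  next
    case (force u w) then show ?case using assms(2) unfolding simple_graph_def by blast
  qed
qed

lemma fclosure_min:
  assumes "B \<subseteq> C"
    and cl: "\<And>u w. u \<in> C \<Longrightarrow> E u w \<Longrightarrow> (u, w) \<notin> G \<Longrightarrow> (\<And>x. E u x \<Longrightarrow> x \<noteq> w \<Longrightarrow> x \<in> C) \<Longrightarrow> w \<in> C"
  shows "fclosure V E G B \<subseteq> C"
proof
  fix x assume "x \<in> fclosure V E G B"
  then show "x \<in> C"
  proof induction
    case (init b) then show ?case using assms(1) by blast
  next
    case (force u w) show ?case by (rule cl[of u]) (fact force)+
  qed
qed
lemma mixed_imp:
  assumes g: "simple_graph V E" and lf: "leaky_forcing_set V E k B"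
  shows "mixed_leaky_forcing_set V E k B"
  unfolding mixed_leaky_forcing_set_def
proof (intro conjI allI impI)
  show BV: "B \<subseteq> V" using lf by (simp add: leaky_forcing_set_def)
  fix L :: "'a leak set"
  assume "finite L \<and> card L \<le> k \<and> (\<forall>l\<in>L. valid_leak V E l)"
  hence fL: "finite L" and cL: "card L \<le> k" and vL: "\<forall>l\<in>L. valid_leak V E l" by auto
  define F where "F = (\<Union>l\<in>L. forbidden l)"
  define C where "C = fclosure V E F B"
  define gf where "gf l = (case l of VLeak v \<Rightarrow> v | SLeak x y \<Rightarrow> x
        | ELeak x y \<Rightarrow> (if x \<in> C then x else y))" for l
  define S where "S = gf ` L"
  have SV: "S \<subseteq> V"
  proof
    fix s assume "s \<in> S"
    then obtain l where l: "l \<in> L" "s = gf l" unfolding S_def by auto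
    with vL have "valid_leak V E l" by auto
    with l g show "s \<in> V"
      by (cases l) (auto simp: gf_def valid_leak_def simple_graph_def)
  qed
  have cS: "card S \<le> k" unfolding S_def using card_image_le[OF fL, of gf] cL by linarith
  have full: "fclosure V E {(u, w). u \<in> S} B = V"
    using lf SV cS by (simp add: leaky_forcing_set_def)
  have BC: "B \<subseteq> C" unfolding C_def by (auto intro: fclosure.init)
  have "fclosure V E {(u, w). u \<in> S} B \<subseteq> C"
  proof (rule fclosure_min[OF BC])
    fix u w
    assume u: "u \<in> C" and e: "E u w" and nG: "(u, w) \<notin> {(u, w). u \<in> S}"
      and oth: "\<And>x. E u x \<Longrightarrow> x \<noteq> w \<Longrightarrow> x \<in> C"
    show "w \<in> C"
    proof (rule ccontr)
      assume wC: "w \<notin> C"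
      have "(u, w) \<in> F"
      proof (rule ccontr)
        assume "(u, w) \<notin> F"
        hence "w \<in> C" using u e oth unfolding C_def by (auto intro: fclosure.force)
        with wC show False by simp
      qed
      then obtain l where l: "l \<in> L" "(u, w) \<in> forbidden l" unfolding F_def by auto
      have "u = gf l"
        using l(2) u wC by (cases l) (auto simp: gf_def)
      hence "u \<in> S" using l(1) unfolding S_def by auto
      with nG show False by simp
    qed
  qed
  hence "V \<subseteq> C" using full by simp
  moreover have "C \<subseteq> V" unfolding C_def using fclosure_sub_V[OF BV g] .
  ultimately show "fclosure V E (\<Union>l\<in>L. forbidden l) B = V" unfolding C_def F_def by auto
qed

lemma imp_leaky:
  assumes g: "simple_graph V E" and m: "mixed_leaky_forcing_set V E k B"
  shows "leaky_forcing_set V E k B"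
  unfolding leaky_forcing_set_def
proof (intro conjI allI impI)
  show "B \<subseteq> V" using m by (simp add: mixed_leaky_forcing_set_def)
  fix L assume L: "L \<subseteq> V \<and> card L \<le> k"
  have fL: "finite L" using L g finite_subset by (auto simp: simple_graph_def)
  let ?L = "VLeak ` L"
  have "card ?L \<le> k" using card_image_le[OF fL, of VLeak] L by linarith
  moreover have "\<forall>l\<in>?L. valid_leak V E l" using L by (auto simp: valid_leak_def)
  moreover have eqF: "(\<Union>l\<in>?L. forbidden l) = {(u, w). u \<in> L}" by auto
  ultimately have "fclosure V E (\<Union>l\<in>?L. forbidden l) B = V"
    using m fL unfolding mixed_leaky_forcing_set_def by blast
  then show "fclosure V E {(u, w). u \<in> L} B = V" by (simp only: eqF)
qed

theorem corollary4p3: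
  fixes V :: "'a set" and E :: "'a \<Rightarrow> 'a \<Rightarrow> bool" and k :: nat
  assumes "simple_graph V E"
  shows "(\<forall>B. leaky_forcing_set V E k B \<longleftrightarrow> mixed_leaky_forcing_set V E k B)
         \<and> leaky_Z V E k = mixed_leaky_Z V E k"
proof -
  have eq: "\<forall>B. leaky_forcing_set V E k B \<longleftrightarrow> mixed_leaky_forcing_set V E k B"
    using mixed_imp imp_leaky assms by blast
  then show ?thesis unfolding leaky_Z_def mixed_leaky_Z_def by simp
qed

end
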